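(* Let $\Gamma$ be a finitely generated discrete group with finite symmetric generating set $Q$, let $Z\subseteq\mathrm{Sub}(\Gamma)$ be a uniformly recurrent subgroup, and let $H\in Z$. If $Z$ is generic, then the groupoid $\mathcal{G}_H$ is principal.
   Context: Word length $l(\gamma)$ is taken with respect to $Q$. $\mathrm{Sub}(\Gamma)$ is the space of subgroups of $\Gamma$ with the topology of pointwise convergence of indicator functions, with $\Gamma$ acting by conjugation $\gamma.H=\gamma H\gamma^{-1}$. A uniformly recurrent subgroup (URS) is a nonempty closed $\Gamma$-invariant subset $Z\subseteq\mathrm{Sub}(\Gamma)$ on which every $\Gamma$-orbit is dense. $Z$ is generic if for every $H'\in Z$ the stabiliser $\{\gamma\in\Gamma:\gamma H'\gamma^{-1}=H'\}$ equals $H'$. A groupoid is principal if every arrow whose range equals its source is a unit. For $H\le\Gamma$, the Schreier graph $S(H)$ is the rooted labeled graph with vertex set $\Gamma/H$, root $H$, and for each $\gamma H$ and $q\in Q$ an edge from $\gamma H$ to $q\gamma H$ labeled $q$; $B_n(S,p)$ is the ball of radius $n$ (path metric) around $p$; root-label isomorphism means graph isomorphism preserving roots and labels. The groupoid $\mathcal{G}_H$: write $S=S(H)$. For $p\in\Gamma/H$, $n\ge0$ let $[p]_n$ be the root-label isomorphism class of $(B_n(S,p),p)$; $E_n=\{[p]_n\}$ with maps $[p]_{n+1}\mapsto[p]_n$; $\mathcal{G}_H^0=\varprojlim E_n$. For $x=(x_n)\in\mathcal{G}_H^0$ choose $p_n$ with $x_n=[p_n]_n$. Arrows are classes of pairs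 $(x,\gamma)$, $x\in\mathcal{G}_H^0$, $\gamma\in\Gamma$, with $(x,\gamma)\sim(x,\gamma')$ iff $\gamma p_n=\gamma'p_n$ for all large $n$. Range $r(x,\gamma)=x$, source $\gamma.x$ with $(\gamma.x)_n=[\gamma p_{n+l(\gamma)}]_n$, product $(x,\gamma')(\gamma'.x,\gamma)=(x,\gamma\gamma')$, inverse $(\gamma.x,\gamma^{-1})$, units $(x,e)$. *)

theory Defs
  imports "HOL-Algebra.Algebra"
begin

definition fg_sym_gen :: "('a,'b) monoid_scheme \<Rightarrow> 'a set \<Rightarrow> bool" where
  "fg_sym_gen G Q \<longleftrightarrow> finite Q \<and> Q \<subseteq> carrier G \<and> (\<forall>q\<in>Q. inv\<^bsub>G\<^esub> q \<in> Q)
      \<and> generate G Q = carrier G"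

definition word_val :: "('a,'b) monoid_scheme \<Rightarrow> 'a list \<Rightarrow> 'a" where
  "word_val G ws = foldr (\<lambda>a b. a \<otimes>\<^bsub>G\<^esub> b) ws \<one>\<^bsub>G\<^esub>"

definition word_length :: "('a,'b) monoid_scheme \<Rightarrow> 'a set \<Rightarrow> 'a \<Rightarrow> nat" where
  "word_length G Q g = (LEAST n. \<exists>ws. set ws \<subseteq> Q \<and> length ws = n \<and> word_val G ws = g)"

definition Sub :: "('a,'b) monoid_scheme \<Rightarrow> 'a set set" where
  "Sub G = {K. subgroup K G}"

definition conjg :: "('a,'b) monoid_scheme \<Rightarrow> 'a \<Rightarrow> 'a set \<Rightarrow> 'a set" where
  "conjg G g K = {g \<otimes>\<^bsub>G\<^esub> k \<otimes>\<^bsub>G\<^esub> inv\<^bsub>G\<^esub> g | k. k \<in> K}"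

(* Basic open sets of the topology of pointwise convergence of indicator functions
   (= product topology on {0,1}^Gamma restricted to Sub(Gamma)):
   the subgroups agreeing with K on a finite set F. *)
definition basic_nbhd :: "('a,'b) monoid_scheme \<Rightarrow> 'a set \<Rightarrow> 'a set \<Rightarrow> 'a set set" where
  "basic_nbhd G K F = {K' \<in> Sub G. K' \<inter> F = K \<inter> F}"

definition closed_in_Sub :: "('a,'b) monoid_scheme \<Rightarrow> 'a set set \<Rightarrow> bool" where
  "closed_in_Sub G Z \<longleftrightarrow> Z \<subseteq> Sub G \<and>
     (\<forall>K \<in> Sub G - Z. \<exists>F. finite F \<and> F \<subseteq> carrier G \<and> basic_nbhd G K F \<inter> Z = {})"

definition URS :: "('a,'b) monoid_scheme \<Rightarrow> 'a set set \<Rightarrow> bool" where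
  "URS G Z \<longleftrightarrow> Z \<noteq> {} \<and> closed_in_Sub G Z \<and>
     (\<forall>g \<in> carrier G. \<forall>K \<in> Z. conjg G g K \<in> Z) \<and>
     (\<forall>K \<in> Z. \<forall>K' \<in> Z. \<forall>F. finite F \<and> F \<subseteq> carrier G \<longrightarrow>
        (\<exists>g \<in> carrier G. conjg G g K \<in> basic_nbhd G K' F))"

definition generic_URS :: "('a,'b) monoid_scheme \<Rightarrow> 'a set set \<Rightarrow> bool" where
  "generic_URS G Z \<longleftrightarrow> (\<forall>K \<in> Z. {g \<in> carrier G. conjg G g K = K} = K)"

(* Schreier graph S(H): vertices Gamma/H (left cosets), edges c --q--> q c *)
definition sverts :: "('a,'b) monoid_scheme \<Rightarrow> 'a set \<Rightarrow> 'a set set" where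
  "sverts G H = {g <#\<^bsub>G\<^esub> H | g. g \<in> carrier G}"

(* closed ball of radius n around p in the path metric (Q symmetric, so directed and
   undirected path lengths agree) *)
definition sball :: "('a,'b) monoid_scheme \<Rightarrow> 'a set \<Rightarrow> 'a set \<Rightarrow> nat \<Rightarrow> 'a set \<Rightarrow> 'a set set" where
  "sball G Q H n p = {c \<in> sverts G H. \<exists>ws. set ws \<subseteq> Q \<and> length ws \<le> n \<and>
                                          word_val G ws <#\<^bsub>G\<^esub> p = c}"

(* root-label isomorphism between (B_n(S,p),p) and (B_n(S,p'),p'); the ball carries all
   labelled edges of S(H) between its vertices *)
definition rl_iso :: "('a,'b) monoid_scheme \<Rightarrow> 'a set \<Rightarrow> 'a set \<Rightarrow> nat \<Rightarrow> 'a set \<Rightarrow> 'a set \<Rightarrow> bool" where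
  "rl_iso G Q H n p p' \<longleftrightarrow> (\<exists>f. bij_betw f (sball G Q H n p) (sball G Q H n p') \<and> f p = p' \<and>
      (\<forall>c \<in> sball G Q H n p. \<forall>c' \<in> sball G Q H n p. \<forall>q \<in> Q.
          (q <#\<^bsub>G\<^esub> c = c') \<longleftrightarrow> (q <#\<^bsub>G\<^esub> f c = f c')))"

(* [p]_n, represented as the set of vertices with root-label isomorphic n-balls *)
definition cls :: "('a,'b) monoid_scheme \<Rightarrow> 'a set \<Rightarrow> 'a set \<Rightarrow> nat \<Rightarrow> 'a set \<Rightarrow> 'a set set" where
  "cls G Q H n p = {p' \<in> sverts G H. rl_iso G Q H n p p'}"

definition En :: "('a,'b) monoid_scheme \<Rightarrow> 'a set \<Rightarrow> 'a set \<Rightarrow> nat \<Rightarrow> 'a set set set" where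
  "En G Q H n = cls G Q H n ` sverts G H"

(* G_H^0 = inverse limit of E_n along [p]_{n+1} |-> [p]_n *)
definition units_GH :: "('a,'b) monoid_scheme \<Rightarrow> 'a set \<Rightarrow> 'a set \<Rightarrow> (nat \<Rightarrow> 'a set set) set" where
  "units_GH G Q H = {x. \<forall>n. x n \<in> En G Q H n \<and> (\<forall>p \<in> x (Suc n). x n = cls G Q H n p)}"

definition rep :: "(nat \<Rightarrow> 'a set set) \<Rightarrow> nat \<Rightarrow> 'a set" where
  "rep x n = (SOME p. p \<in> x n)"

(* source of the arrow (x,gamma): (gamma.x)_n = [gamma p_{n+l(gamma)}]_n *)
definition act_GH :: "('a,'b) monoid_scheme \<Rightarrow> 'a set \<Rightarrow> 'a set \<Rightarrow> 'a \<Rightarrow> (nat \<Rightarrow> 'a set set) \<Rightarrow> nat \<Rightarrow> 'a set set" where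
  "act_GH G Q H g x = (\<lambda>n. cls G Q H n (g <#\<^bsub>G\<^esub> rep x (n + word_length G Q g)))"

definition arrow_equiv :: "('a,'b) monoid_scheme \<Rightarrow> (nat \<Rightarrow> 'a set set) \<Rightarrow> 'a \<Rightarrow> 'a \<Rightarrow> bool" where
  "arrow_equiv G x g g' \<longleftrightarrow> (\<exists>N. \<forall>n\<ge>N. g <#\<^bsub>G\<^esub> rep x n = g' <#\<^bsub>G\<^esub> rep x n)"

(* G_H is principal: every arrow [(x,gamma)] whose range x equals its source gamma.x
   is a unit, i.e. equals [(x,e)] *)
definition principal_GH :: "('a,'b) monoid_scheme \<Rightarrow> 'a set \<Rightarrow> 'a set \<Rightarrow> bool" where
  "principal_GH G Q H \<longleftrightarrow> (\<forall>x \<in> units_GH G Q H. \<forall>g \<in> carrier G.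
       act_GH G Q H g x = x \<longrightarrow> arrow_equiv G x g \<one>\<^bsub>G\<^esub>)"

end

theory Submission imports Defs begin

context group begin

lemma word_val_closed: "set ws \<subseteq> Q \<Longrightarrow> Q \<subseteq> carrier G \<Longrightarrow> word_val G ws \<in> carrier G"
  by (induction ws) (auto simp: word_val_def)

lemma word_val_Cons: "word_val G (q # ws) = q \<otimes> word_val G ws"
  by (simp add: word_val_def)

lemma word_val_append: "set ws \<subseteq> Q \<Longrightarrow> set vs \<subseteq> Q \<Longrightarrow> Q \<subseteq> carrier G \<Longrightarrow>
   word_val G (ws @ vs) = word_val G ws \<otimes> word_val G vs"
proof (induction ws)
  case Nil
  then show ?case using word_val_closed[of vs Q] by (simp add: word_val_def)
next
  case (Cons a ws)
  have "a \<in> carrier G" using Cons by auto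
  then show ?case using Cons word_val_closed[of ws Q] word_val_closed[of vs Q]
    by (simp add: word_val_Cons m_assoc)
qed

lemma word_val_inv: "set ws \<subseteq> Q \<Longrightarrow> Q \<subseteq> carrier G \<Longrightarrow> (\<forall>q\<in>Q. inv q \<in> Q) \<Longrightarrow>
   word_val G (rev (map (\<lambda>q. inv q) ws)) = inv (word_val G ws) \<and> set (rev (map (\<lambda>q. inv q) ws)) \<subseteq> Q"
proof (induction ws)
  case Nil
  then show ?case by (simp add: word_val_def)
next
  case (Cons a ws)
  have ac: "a \<in> carrier G" using Cons by auto
  have s: "set (rev (map (\<lambda>q. inv q) ws)) \<subseteq> Q" "set [inv a] \<subseteq> Q" using Cons by auto
  have "word_val G (rev (map (\<lambda>q. inv q) (a # ws))) = word_val G (rev (map (\<lambda>q. inv q) ws)) \<otimes> word_val G [inv a]"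
    using word_val_append[OF s] Cons by simp
  also have "\<dots> = inv (word_val G ws) \<otimes> inv a" using Cons ac by (simp add: word_val_def)
  also have "\<dots> = inv (word_val G (a # ws))" using Cons ac word_val_closed[of ws Q]
    by (simp add: word_val_Cons inv_mult_group)
  finally show ?case using s by simp
qed

lemma generate_words: "h \<in> generate G Q \<Longrightarrow> Q \<subseteq> carrier G \<Longrightarrow> (\<forall>q\<in>Q. inv q \<in> Q) \<Longrightarrow>
   \<exists>ws. set ws \<subseteq> Q \<and> word_val G ws = h"
proof (induction rule: generate.induct)
  case one
  then show ?case by (intro exI[of _ "[]"]) (simp add: word_val_def)
next
  case (incl h)
  then show ?case by (intro exI[of _ "[h]"]) (auto simp: word_val_def)
next
  case (inv h)
  then show ?case by (intro exI[of _ "[inv h]"]) (auto simp: word_val_def)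
next
  case (eng h1 h2)
  then obtain w1 w2 where "set w1 \<subseteq> Q" "word_val G w1 = h1" "set w2 \<subseteq> Q" "word_val G w2 = h2" by blast
  then show ?case using word_val_append[of w1 Q w2] eng.prems by (intro exI[of _ "w1 @ w2"]) auto
qed


context
  fixes H Q assumes HG: "subgroup H G" and QG: "Q \<subseteq> carrier G"
begin

lemma sverts_sub: "p \<in> sverts G H \<Longrightarrow> p \<subseteq> carrier G"
  using HG by (auto simp: sverts_def intro: l_coset_carrier)

lemma sverts_mult: "p \<in> sverts G H \<Longrightarrow> g \<in> carrier G \<Longrightarrow> g <# p \<in> sverts G H"
  using HG subgroup.subset[OF HG] by (auto simp: sverts_def lcos_m_assoc)

lemma cls_refl: "p \<in> sverts G H \<Longrightarrow> p \<in> cls G Q H n p"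
  unfolding cls_def rl_iso_def by (auto intro!: exI[of _ id])

lemma path_lemma:
  assumes bij: "bij_betw f (sball G Q H k p) (sball G Q H k p')" and fp: "f p = p'"
    and edge: "\<forall>c \<in> sball G Q H k p. \<forall>c' \<in> sball G Q H k p. \<forall>q \<in> Q.
          (q <# c = c') \<longleftrightarrow> (q <# f c = f c')"
    and p: "p \<in> sverts G H" and p': "p' \<in> sverts G H"
  shows "set ws \<subseteq> Q \<Longrightarrow> length ws \<le> k \<Longrightarrow>
     word_val G ws <# p \<in> sball G Q H k p \<and> f (word_val G ws <# p) = word_val G ws <# p'"
proof (induction ws)
  case Nil
  have "\<one> <# p = p" "\<one> <# p' = p'" using sverts_sub p p' lcos_mult_one by auto
  moreover have "p \<in> sball G Q H k p" using p unfolding sball_def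
    by (auto intro!: exI[of _ "[]"] simp: word_val_def lcos_mult_one sverts_sub)
  ultimately show ?case using fp by (simp add: word_val_def)
next
  case (Cons q ws)
  let ?w = "word_val G ws"
  have IH: "?w <# p \<in> sball G Q H k p" "f (?w <# p) = ?w <# p'" using Cons by auto
  have qc: "q \<in> carrier G" "?w \<in> carrier G" using Cons QG word_val_closed by auto
  have eq: "word_val G (q # ws) <# p = q <# (?w <# p)"
     "word_val G (q # ws) <# p' = q <# (?w <# p')"
    using qc sverts_sub p p' by (auto simp: word_val_Cons lcos_m_assoc)
  have inb: "q <# (?w <# p) \<in> sball G Q H k p"
    unfolding sball_def using Cons.prems p qc eq(1)[symmetric] sverts_mult[OF p]
      word_val_closed[of "q#ws" Q] QG
    by (auto intro!: exI[of _ "q # ws"])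
  have "q <# f (?w <# p) = f (q <# (?w <# p))"
  proof -
    have "q \<in> Q" using Cons.prems by auto
    then show ?thesis using edge IH(1) inb by blast
  qed
  then show ?case using eq inb IH by simp
qed

lemma loop_lemma:
  assumes "rl_iso G Q H k p p'" "p \<in> sverts G H" "p' \<in> sverts G H"
    "set ws \<subseteq> Q" "length ws \<le> k"
  shows "word_val G ws <# p = p \<longleftrightarrow> word_val G ws <# p' = p'"
proof -
  obtain f where bij: "bij_betw f (sball G Q H k p) (sball G Q H k p')" and fp: "f p = p'"
    and edge: "\<forall>c \<in> sball G Q H k p. \<forall>c' \<in> sball G Q H k p. \<forall>q \<in> Q.
          (q <# c = c') \<longleftrightarrow> (q <# f c = f c')"
    using assms(1) unfolding rl_iso_def by blast
  note P = path_lemma[OF bij fp edge assms(2,3,4,5)]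
  have P0: "p \<in> sball G Q H k p" using path_lemma[OF bij fp edge assms(2,3), of "[]"]
    sverts_sub[OF assms(2)] by (simp add: word_val_def lcos_mult_one)
  show ?thesis
  proof
    assume "word_val G ws <# p = p" then show "word_val G ws <# p' = p'" using P fp by auto
  next
    assume "word_val G ws <# p' = p'"
    then have "f (word_val G ws <# p) = f p" using P fp by auto
    then show "word_val G ws <# p = p" using bij P P0 unfolding bij_betw_def inj_on_def by blast
  qed
qed


lemma unit_rep: assumes "x \<in> units_GH G Q H" shows "rep x n \<in> x n" "x n \<subseteq> sverts G H"
proof -
  have "x n \<in> En G Q H n" using assms by (simp add: units_GH_def)
  then obtain p0 where p0: "p0 \<in> sverts G H" "x n = cls G Q H n p0" by (auto simp: En_def)
  then have "p0 \<in> x n" using cls_refl by auto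
  then show "rep x n \<in> x n" unfolding rep_def by (rule someI)
  show "x n \<subseteq> sverts G H" using p0 by (auto simp: cls_def)
qed

lemma unit_next: assumes "x \<in> units_GH G Q H" "p \<in> x (Suc n)" "p' \<in> x n"
  shows "rl_iso G Q H n p p'"
proof -
  have "x n = cls G Q H n p" using assms(1,2) by (simp add: units_GH_def)
  then show ?thesis using assms(3) by (simp add: cls_def)
qed

lemma unit_same: assumes "x \<in> units_GH G Q H" "p \<in> x n" "p' \<in> x n" "set ws \<subseteq> Q" "length ws \<le> n"
  shows "word_val G ws <# p = p \<longleftrightarrow> word_val G ws <# p' = p'"
proof -
  let ?h = "rep x (Suc n)"
  have h: "?h \<in> x (Suc n)" "?h \<in> sverts G H" using unit_rep[OF assms(1)] by auto
  have s: "p \<in> sverts G H" "p' \<in> sverts G H" using unit_rep[OF assms(1)] assms by auto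
  show ?thesis
    using loop_lemma[OF unit_next[OF assms(1) h(1) assms(2)] h(2) s(1) assms(4,5)]
      loop_lemma[OF unit_next[OF assms(1) h(1) assms(3)] h(2) s(2) assms(4,5)] by simp
qed

lemma unit_stable: assumes "x \<in> units_GH G Q H" "set ws \<subseteq> Q" "length ws \<le> n" "n \<le> m"
  shows "word_val G ws <# rep x m = rep x m \<longleftrightarrow> word_val G ws <# rep x n = rep x n"
  using assms(4)
proof (induction m rule: dec_induct)
  case base
  then show ?case by simp
next
  case (step m)
  have h: "rep x (Suc m) \<in> x (Suc m)" "rep x m \<in> x m" using unit_rep[OF assms(1)] by auto
  have s: "rep x (Suc m) \<in> sverts G H" "rep x m \<in> sverts G H" using unit_rep[OF assms(1)] h by auto
  show ?case using loop_lemma[OF unit_next[OF assms(1) h] s assms(2)] step assms(3) by simp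
qed


end

lemma fix_conj: assumes "g \<in> carrier G" "c \<subseteq> carrier G" "y \<in> carrier G"
  shows "y <# (g <# c) = g <# c \<longleftrightarrow> (inv g \<otimes> y \<otimes> g) <# c = c"
proof
  assume a: "y <# (g <# c) = g <# c"
  have "inv g <# (y <# (g <# c)) = (inv g \<otimes> y \<otimes> g) <# c" using assms
    by (simp add: lcos_m_assoc m_assoc)
  moreover have "inv g <# (g <# c) = c" using assms by (simp add: lcos_m_assoc lcos_mult_one)
  ultimately show "(inv g \<otimes> y \<otimes> g) <# c = c" using a by simp
next
  assume a: "(inv g \<otimes> y \<otimes> g) <# c = c"
  have "g <# ((inv g \<otimes> y \<otimes> g) <# c) = y <# (g <# c)" using assms
    by (simp add: lcos_m_assoc m_assoc[symmetric] lcos_mult_one)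
  then show "y <# (g <# c) = g <# c" using a by simp
qed

lemma conj_arith: "g \<in> carrier G \<Longrightarrow> k \<in> carrier G \<Longrightarrow> inv g \<otimes> (g \<otimes> k \<otimes> inv g) \<otimes> g = k"
  by (metis inv_closed l_inv m_assoc m_closed r_inv r_one l_one)

lemma conj_arith2: "g \<in> carrier G \<Longrightarrow> k \<in> carrier G \<Longrightarrow> g \<otimes> (inv g \<otimes> k \<otimes> g) \<otimes> inv g = k"
  by (metis inv_closed l_inv m_assoc m_closed r_inv r_one l_one)

lemma coset_self_iff: "subgroup H G \<Longrightarrow> d \<in> carrier G \<Longrightarrow> d <# H = H \<longleftrightarrow> d \<in> H"
proof
  assume "subgroup H G" "d \<in> carrier G" "d <# H = H"
  moreover have "d \<otimes> \<one> \<in> d <# H" using \<open>subgroup H G\<close> subgroup.one_closed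
    unfolding l_coset_def by blast
  ultimately show "d \<in> H" using \<open>d \<in> carrier G\<close> by simp
qed (rule coset_join3)

lemma conj_mem_iff: assumes "subgroup H G" "a \<in> carrier G" "y \<in> carrier G"
  shows "y \<in> conjg G a H \<longleftrightarrow> inv a \<otimes> y \<otimes> a \<in> H"
proof
  assume "y \<in> conjg G a H"
  then obtain k where "k \<in> H" "y = a \<otimes> k \<otimes> inv a" by (auto simp: conjg_def)
  then show "inv a \<otimes> y \<otimes> a \<in> H" using assms conj_arith subgroup.subset by fastforce
next
  assume "inv a \<otimes> y \<otimes> a \<in> H"
  then show "y \<in> conjg G a H" unfolding conjg_def using conj_arith2[of a y] assms by force
qed

lemma main_prop:
  assumes "fg_sym_gen G Q"
    and "URS G Z"
    and "H \<in> Z"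
    and "generic_URS G Z"
  shows "principal_GH G Q H"
proof -
  have QG: "Q \<subseteq> carrier G" and Qsym: "\<forall>q\<in>Q. inv q \<in> Q" and gen: "generate G Q = carrier G"
    using assms(1) unfolding fg_sym_gen_def by blast+
  have ZS: "Z \<subseteq> Sub G" and Zcl: "\<forall>K \<in> Sub G - Z. \<exists>F. finite F \<and> F \<subseteq> carrier G \<and> basic_nbhd G K F \<inter> Z = {}"
    and Zinv: "\<forall>g \<in> carrier G. \<forall>K \<in> Z. conjg G g K \<in> Z"
    using assms(2) unfolding URS_def closed_in_Sub_def by blast+
  have HG: "subgroup H G" using ZS assms(3) by (auto simp: Sub_def)
  have words: "\<exists>ws. set ws \<subseteq> Q \<and> word_val G ws = y" if "y \<in> carrier G" for y
    using generate_words[of y Q] gen QG Qsym that by auto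
  show ?thesis unfolding principal_GH_def
  proof (intro ballI impI)
    fix x g assume xu: "x \<in> units_GH G Q H" and gc: "g \<in> carrier G" and act: "act_GH G Q H g x = x"
    define p where "p = rep x"
    define L where "L = word_length G Q g"
    have "\<exists>n ws. set ws \<subseteq> Q \<and> length ws = n \<and> word_val G ws = g" using words[OF gc] by auto
    then have "\<exists>ws. set ws \<subseteq> Q \<and> length ws = L \<and> word_val G ws = g"
      unfolding L_def word_length_def by (rule LeastI_ex)
    then obtain wg where wg: "set wg \<subseteq> Q" "length wg = L" "word_val G wg = g" by blast
    have psv: "p m \<in> x m" "p m \<in> sverts G H" for m
      using unit_rep[OF HG QG xu] unfolding p_def by auto
    have psub: "p m \<subseteq> carrier G" for m using sverts_sub[OF HG] psv by auto
    define H' where "H' = {y \<in> carrier G. \<exists>N. \<forall>m\<ge>N. y <# p m = p m}"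
    have T: "word_val G ws \<in> H' \<longleftrightarrow> word_val G ws <# p k = p k"
      if "set ws \<subseteq> Q" "length ws \<le> k" for ws k
    proof
      assume "word_val G ws \<in> H'"
      then obtain N where "\<forall>m\<ge>N. word_val G ws <# p m = p m" unfolding H'_def by blast
      then have "word_val G ws <# p (max N k) = p (max N k)" by simp
      then show "word_val G ws <# p k = p k"
        using unit_stable[OF HG QG xu that, of "max N k"] unfolding p_def by (simp del: max_def)
    next
      assume "word_val G ws <# p k = p k"
      then have "\<forall>m\<ge>k. word_val G ws <# p m = p m"
        using unit_stable[OF HG QG xu that] unfolding p_def by blast
      then show "word_val G ws \<in> H'" unfolding H'_def
        using word_val_closed[OF that(1) QG] by blast
    qed
    have H'sub: "subgroup H' G"
    proof (rule subgroupI)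
      show "H' \<subseteq> carrier G" unfolding H'_def by auto
      show "H' \<noteq> {}" unfolding H'_def using psub lcos_mult_one by auto
    next
      fix a assume "a \<in> H'"
      then obtain N where a: "a \<in> carrier G" "\<forall>m\<ge>N. a <# p m = p m" unfolding H'_def by blast
      have "inv a <# p m = p m" if "m \<ge> N" for m
      proof -
        have "inv a <# p m = inv a <# (a <# p m)" using a that by simp
        also have "\<dots> = p m" using a psub by (simp add: lcos_m_assoc lcos_mult_one)
        finally show ?thesis .
      qed
      then show "inv a \<in> H'" unfolding H'_def using a by auto
    next
      fix a b assume "a \<in> H'" "b \<in> H'"
      then obtain N1 N2 where a: "a \<in> carrier G" "\<forall>m\<ge>N1. a <# p m = p m"
        and b: "b \<in> carrier G" "\<forall>m\<ge>N2. b <# p m = p m" unfolding H'_def by blast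
      have "(a \<otimes> b) <# p m = p m" if "m \<ge> max N1 N2" for m
        using a b that psub by (simp add: lcos_m_assoc[symmetric])
      then show "a \<otimes> b \<in> H'" unfolding H'_def using a b by blast
    qed
    have H'Z: "H' \<in> Z"
    proof (rule ccontr)
      assume "H' \<notin> Z"
      then have "H' \<in> Sub G - Z" using H'sub by (simp add: Sub_def)
      then obtain F where F: "finite F" "F \<subseteq> carrier G" "basic_nbhd G H' F \<inter> Z = {}"
        using Zcl by blast
      define lw where "lw y = (SOME ws. set ws \<subseteq> Q \<and> word_val G ws = y)" for y
      have lw: "set (lw y) \<subseteq> Q" "word_val G (lw y) = y" if "y \<in> carrier G" for y
        using someI_ex[OF words[OF that]] unfolding lw_def by auto
      define M where "M = Max (insert 0 ((\<lambda>y. length (lw y)) ` F))"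
      have lM: "length (lw y) \<le> M" if "y \<in> F" for y
        unfolding M_def using F(1) that by (intro Max_ge) auto
      obtain a where a: "a \<in> carrier G" "p M = a <# H" using psv(2)[of M] by (auto simp: sverts_def)
      define K where "K = conjg G a H"
      have KZ: "K \<in> Z" using Zinv a assms(3) unfolding K_def by blast
      have yK: "y \<in> K \<longleftrightarrow> y \<in> H'" if yF: "y \<in> F" for y
      proof -
        have yc: "y \<in> carrier G" using F yF by auto
        have dc: "inv a \<otimes> y \<otimes> a \<in> carrier G" using a yc by simp
        have "y \<in> H' \<longleftrightarrow> y <# p M = p M" using T[OF lw(1)[OF yc] lM[OF yF]] lw(2)[OF yc] by simp
        also have "\<dots> \<longleftrightarrow> y <# (a <# H) = a <# H" using a(2) by simp
        also have "\<dots> \<longleftrightarrow> (inv a \<otimes> y \<otimes> a) <# H = H"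
          using fix_conj[OF a(1) subgroup.subset[OF HG] yc] .
        also have "\<dots> \<longleftrightarrow> inv a \<otimes> y \<otimes> a \<in> H" using coset_self_iff[OF HG dc] .
        also have "\<dots> \<longleftrightarrow> y \<in> K" using conj_mem_iff[OF HG a(1) yc] unfolding K_def by simp
        finally show ?thesis by simp
      qed
      then have "K \<inter> F = H' \<inter> F" by blast
      then have "K \<in> basic_nbhd G H' F \<inter> Z" using KZ ZS unfolding basic_nbhd_def by auto
      then show False using F by auto
    qed
    have key: "y \<in> H' \<longleftrightarrow> inv g \<otimes> y \<otimes> g \<in> H'" if yc: "y \<in> carrier G" for y
    proof -
      obtain wy where wy: "set wy \<subseteq> Q" "word_val G wy = y" using words[OF yc] by blast
      define n where "n = length wy + L"
      have "x n = act_GH G Q H g x n" using act by simp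
      then have xn: "x n = cls G Q H n (g <# p (n + L))"
        unfolding act_GH_def L_def p_def by simp
      have qs: "g <# p (n + L) \<in> sverts G H" using sverts_mult[OF HG QG psv(2) gc] .
      have qx: "g <# p (n + L) \<in> x n" using xn cls_refl[OF HG QG qs] by simp
      have "y \<in> H' \<longleftrightarrow> y <# p n = p n" using T[OF wy(1)] wy(2) n_def by auto
      also have "\<dots> \<longleftrightarrow> y <# (g <# p (n + L)) = g <# p (n + L)"
        using unit_same[OF HG QG xu psv(1) qx wy(1)] wy(2) n_def by auto
      also have "\<dots> \<longleftrightarrow> (inv g \<otimes> y \<otimes> g) <# p (n + L) = p (n + L)"
        using fix_conj[OF gc psub yc] .
      also have "\<dots> \<longleftrightarrow> inv g \<otimes> y \<otimes> g \<in> H'"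
      proof -
        obtain wi where wi: "word_val G wi = inv g" "set wi \<subseteq> Q" "length wi = L"
          using word_val_inv[OF wg(1) QG Qsym] wg by (intro that[of "rev (map (\<lambda>q. inv q) wg)"]) auto
        have s: "set (wi @ wy @ wg) \<subseteq> Q" using wi wy wg by auto
        have "word_val G (wi @ wy @ wg) = inv g \<otimes> y \<otimes> g"
          using word_val_append[of wi Q "wy @ wg"] word_val_append[of wy Q wg] wi wy wg QG
            word_val_closed[of wy Q] word_val_closed[of wg Q] gc by (simp add: m_assoc)
        moreover have "length (wi @ wy @ wg) \<le> n + L" using wi wg n_def by simp
        ultimately show ?thesis using T[OF s] by auto
      qed
      finally show ?thesis .
    qed
    have "conjg G g H' = H'"
    proof (intro equalityI subsetI)
      fix y assume "y \<in> conjg G g H'"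
      then obtain k where k: "k \<in> H'" "y = g \<otimes> k \<otimes> inv g" by (auto simp: conjg_def)
      have kc: "k \<in> carrier G" using k H'sub subgroup.subset by blast
      have yc: "y \<in> carrier G" using k(2) kc gc by simp
      have "inv g \<otimes> y \<otimes> g = k" using k(2) conj_arith[OF gc kc] by simp
      then show "y \<in> H'" using key[OF yc] k(1) by simp
    next
      fix y assume y: "y \<in> H'"
      then have yc: "y \<in> carrier G" using H'sub subgroup.subset by blast
      then have "inv g \<otimes> y \<otimes> g \<in> H'" using key y by auto
      then show "y \<in> conjg G g H'" unfolding conjg_def using conj_arith2[OF gc yc] by force
    qed
    then have "g \<in> H'" using assms(4) H'Z gc unfolding generic_URS_def by blast
    then obtain N where "\<forall>m\<ge>N. g <# p m = p m" unfolding H'_def by blast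
    then show "arrow_equiv G x g \<one>" unfolding arrow_equiv_def p_def
      using psub lcos_mult_one unfolding p_def by auto
  qed
qed

end

theorem proposition5p1:
  fixes G :: "('a, 'b) monoid_scheme" and Q :: "'a set" and Z :: "'a set set" and H :: "'a set"
  assumes "group G"
    and "fg_sym_gen G Q"
    and "URS G Z"
    and "H \<in> Z"
    and "generic_URS G Z"
  shows "principal_GH G Q H"
  using group.main_prop[OF assms] .

end
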